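(* Let $g$ satisfy Assumption B, let $L>0$ with $1/L>s_0$, and let $u,z\in\mathbb{R}$ with $u\in\mathcal{G}_L(z)$. Then: if $u>0$, $u\ge\max\big(\sigma(1/L),\ \tfrac{Lq_0(1/L)-z}{L}\big)$; if $u<0$, $u\le\min\big(-\sigma(1/L),\ -\tfrac{Lq_0(1/L)+z}{L}\big)$; if $u=0$, $|z|\le Lq_0(1/L)$. Here $\sigma(1/L)>0$ and $q_0(1/L)>0$.
   Context: Assumption B on $g:\mathbb{R}\to\mathbb{R}\cup\{+\infty\}$: (B1) lsc, symmetric, $g(0)=0$; (B2) $g(u)<\infty$ for some $u\ne0$; (B3) one of (B3a) $g$ twice differentiable on some $(0,\epsilon)$, $\limsup_{u\searrow0}g''(u)\in(-\infty,0)$; (B3b) same differentiability, $\lim_{u\searrow0}g''(u)=-\infty$; (B3c) $\liminf_{u\searrow0}g(u)>0$; (B4) $g\ge0$. $\operatorname{prox}_{sg}(q):=\operatorname{argmin}_{u\in\mathbb{R}}(\tfrac12|u-q|^2+sg(u))$. $s_0:=0$ if (B3b) or (B3c) holds, otherwise $s_0:=-1/\limsup_{u\searrow0}g''(u)$. For $s>0$: $\sigma(s):=\inf\{|u|:\ u\ne0,\ u\in\operatorname{prox}_{sg}(q)\text{ for some }q\}$ and $q_0(s):=\sup\{q\ge0:\ q|u|\le\tfrac12u^2+sg(u)\ \forall u\in\mathbb{R}\}$. The set-valued map $\mathcal{G}_L:\mathbb{R}\rightrightarrows\mathbb{R}$ is defined by: $u\in\mathcal{G}_L(z)$ iff $u$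 is a global minimizer of $v\mapsto -zv+\frac L2(v-u)^2+g(v)$ over $v\in\mathbb{R}$. *)

theory Defs
  imports "HOL-Analysis.Analysis"
begin

text \<open>Extended-real-valued functions g : real => real \<union> {+\<infinity>} are modelled as
  functions real \<Rightarrow> ereal that never take the value -\<infinity>.\<close>

definition lsc_fun :: "(real \<Rightarrow> ereal) \<Rightarrow> bool" where
  "lsc_fun g \<longleftrightarrow> (\<forall>x. g x \<le> Liminf (at x) g)"

definition greal :: "(real \<Rightarrow> ereal) \<Rightarrow> real \<Rightarrow> real" where
  "greal g = (\<lambda>u. real_of_ereal (g u))"

definition g2 :: "(real \<Rightarrow> ereal) \<Rightarrow> real \<Rightarrow> real" where
  "g2 g = deriv (deriv (greal g))"

definition twice_diff_right0 :: "(real \<Rightarrow> ereal) \<Rightarrow> bool" where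
  "twice_diff_right0 g \<longleftrightarrow> (\<exists>eps>0. \<forall>x\<in>{0<..<eps}.
      g x \<noteq> \<infinity> \<and> g x \<noteq> -\<infinity> \<and>
      (greal g has_real_derivative deriv (greal g) x) (at x) \<and>
      (deriv (greal g) has_real_derivative g2 g x) (at x))"

definition B3a :: "(real \<Rightarrow> ereal) \<Rightarrow> bool" where
  "B3a g \<longleftrightarrow> twice_diff_right0 g \<and>
     Limsup (at_right 0) (\<lambda>u. ereal (g2 g u)) > -\<infinity> \<and>
     Limsup (at_right 0) (\<lambda>u. ereal (g2 g u)) < 0"

definition B3b :: "(real \<Rightarrow> ereal) \<Rightarrow> bool" where
  "B3b g \<longleftrightarrow> twice_diff_right0 g \<and>
     ((\<lambda>u. ereal (g2 g u)) \<longlongrightarrow> -\<infinity>) (at_right 0)"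

definition B3c :: "(real \<Rightarrow> ereal) \<Rightarrow> bool" where
  "B3c g \<longleftrightarrow> Liminf (at_right 0) g > 0"

definition assumptionB :: "(real \<Rightarrow> ereal) \<Rightarrow> bool" where
  "assumptionB g \<longleftrightarrow>
     (\<forall>u. g u \<noteq> -\<infinity>) \<and>
     lsc_fun g \<and> (\<forall>u. g (-u) = g u) \<and> g 0 = 0 \<and>
     (\<exists>u. u \<noteq> 0 \<and> g u < \<infinity>) \<and>
     (B3a g \<or> B3b g \<or> B3c g) \<and>
     (\<forall>u. g u \<ge> 0)"

definition s0 :: "(real \<Rightarrow> ereal) \<Rightarrow> real" where
  "s0 g = (if B3b g \<or> B3c g then 0
           else - 1 / real_of_ereal (Limsup (at_right 0) (\<lambda>u. ereal (g2 g u))))"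

definition prox :: "(real \<Rightarrow> ereal) \<Rightarrow> real \<Rightarrow> real \<Rightarrow> real set" where
  "prox g s q = {u. \<forall>v. ereal ((1/2) * \<bar>u - q\<bar>^2) + ereal s * g u
                          \<le> ereal ((1/2) * \<bar>v - q\<bar>^2) + ereal s * g v}"

definition sigma :: "(real \<Rightarrow> ereal) \<Rightarrow> real \<Rightarrow> real" where
  "sigma g s = Inf {\<bar>u\<bar> | u. u \<noteq> 0 \<and> (\<exists>q. u \<in> prox g s q)}"

definition q0 :: "(real \<Rightarrow> ereal) \<Rightarrow> real \<Rightarrow> real" where
  "q0 g s = Sup {q. q \<ge> 0 \<and> (\<forall>u. ereal (q * \<bar>u\<bar>) \<le> ereal ((1/2) * u^2) + ereal s * g u)}"

text \<open>u \<in> G_L(z) iff u globally minimizes v \<mapsto> -z v + L/2 (v-u)^2 + g v\<close>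
definition GL :: "(real \<Rightarrow> ereal) \<Rightarrow> real \<Rightarrow> real \<Rightarrow> real set" where
  "GL g L z = {u. \<forall>v. ereal (- z * u + L / 2 * (u - u)^2) + g u
                        \<le> ereal (- z * v + L / 2 * (v - u)^2) + g v}"

end

theory Submission
  imports Defs
begin


lemma prox_neg:
  assumes "u \<in> prox g s q" "\<And>v. g (-v) = g v"
  shows "-u \<in> prox g s (-q)"
  unfolding prox_def
proof (safe)
  fix v
  have "ereal ((1/2) * \<bar>u - q\<bar>^2) + ereal s * g u
        \<le> ereal ((1/2) * \<bar>(-v) - q\<bar>^2) + ereal s * g (-v)"
    using assms(1) unfolding prox_def by blast
  moreover have "\<bar>-u - -q\<bar> = \<bar>u - q\<bar>" "\<bar>v - -q\<bar> = \<bar>(-v) - q\<bar>" by linarith+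
  ultimately show "ereal ((1/2) * \<bar>-u - -q\<bar>^2) + ereal s * g (-u)
        \<le> ereal ((1/2) * \<bar>v - -q\<bar>^2) + ereal s * g v"
    using assms(2)[of u] assms(2)[of v] by simp
qed

lemma prox_cmp0:
  assumes "u \<in> prox g s q" "g 0 = 0" "s > 0" "\<And>x. g x \<ge> 0"
  shows "g u \<noteq> \<infinity> \<and> q * u \<ge> (1/2)*u^2 + s * real_of_ereal (g u)"
proof -
  have H: "ereal ((1/2) * \<bar>u - q\<bar>^2) + ereal s * g u
        \<le> ereal ((1/2) * \<bar>0 - q\<bar>^2) + ereal s * g 0"
    using assms(1) unfolding prox_def by blast
  show ?thesis
  proof (cases "g u")
    case (real a)
    with H assms have "(1/2) * \<bar>u - q\<bar>^2 + s * a \<le> (1/2) * q^2" by simp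
    moreover have "\<bar>u - q\<bar>^2 = (u-q)^2" by simp
    ultimately show ?thesis using real by (simp add: power2_eq_square algebra_simps)
  next
    case PInf with H assms show ?thesis by simp
  next
    case MInf with assms(4)[of u] show ?thesis by simp
  qed
qed

lemma GL_prox:
  assumes "u \<in> GL g L z" "L > 0" "\<And>x. g x \<ge> 0"
  shows "u \<in> prox g (1/L) (u + z/L)"
  unfolding prox_def
proof safe
  fix v
  have H: "ereal (- z * u + L / 2 * (u - u)^2) + g u
                        \<le> ereal (- z * v + L / 2 * (v - u)^2) + g v"
    using assms(1) unfolding GL_def by blast
  show "ereal ((1/2) * \<bar>u - (u + z/L)\<bar>^2) + ereal (1/L) * g u
        \<le> ereal ((1/2) * \<bar>v - (u + z/L)\<bar>^2) + ereal (1/L) * g v"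
  proof (cases "g v")
    case PInf with assms show ?thesis by simp
  next
    case MInf with assms(3)[of v] show ?thesis by simp
  next
    case (real b)
    show ?thesis
    proof (cases "g u")
      case PInf with H real show ?thesis by simp
    next
      case MInf with assms(3)[of u] show ?thesis by simp
    next
      case (real a)
      with H \<open>g v = ereal b\<close> have h: "- z * u + a \<le> - z * v + L / 2 * (v - u)^2 + b" by simp
      have "(1/L) * (- z * u + a) \<le> (1/L) * (- z * v + L / 2 * (v - u)^2 + b)"
        using h assms(2) by (intro mult_left_mono) auto
      moreover have "(1/2) * (u - (u + z/L))^2 + (1/L) * a = (1/L) * (- z * u + a) + ((1/L)*z*u + (1/2)*(z/L)^2)"
        using assms(2) by (simp add: field_simps power2_eq_square)
      moreover have "(1/2) * (v - (u + z/L))^2 + (1/L) * b = (1/L) * (- z * v + L / 2 * (v - u)^2 + b) + ((1/L)*z*u + (1/2)*(z/L)^2)"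
        using assms(2) by (simp add: field_simps power2_eq_square)
      ultimately have "(1/2) * (u - (u + z/L))^2 + (1/L) * a \<le> (1/2) * (v - (u + z/L))^2 + (1/L) * b"
        by linarith
      moreover have "\<bar>u - (u + z/L)\<bar>^2 = (u - (u + z/L))^2" "\<bar>v - (u + z/L)\<bar>^2 = (v - (u + z/L))^2"
        by (simp only: power2_abs)+
      ultimately show ?thesis using real \<open>g v = ereal b\<close> by (simp only: plus_ereal.simps times_ereal.simps ereal_less_eq)
    qed
  qed
qed



lemma lsc_f:
  assumes "lsc_fun g" "\<And>x. g x \<ge> 0" "s > 0"
  shows "ereal ((1/2) * \<bar>x - q\<bar>^2) + ereal s * g x
     \<le> Liminf (at x) (\<lambda>v. ereal ((1/2) * \<bar>v - q\<bar>^2) + ereal s * g v)"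
proof -
  have nb: "(at x :: real filter) \<noteq> bot" by simp
  have "((\<lambda>v. (1/2) * \<bar>v - q\<bar>^2) \<longlongrightarrow> (1/2) * \<bar>x - q\<bar>^2) (at x)"
    by (intro tendsto_intros)
  hence "((\<lambda>v. ereal ((1/2) * \<bar>v - q\<bar>^2)) \<longlongrightarrow> ereal ((1/2) * \<bar>x - q\<bar>^2)) (at x)"
    by (rule tendsto_ereal)
  hence L1: "Liminf (at x) (\<lambda>v. ereal ((1/2) * \<bar>v - q\<bar>^2)) = ereal ((1/2) * \<bar>x - q\<bar>^2)"
    by (intro lim_imp_Liminf) simp_all
  have L2: "Liminf (at x) (\<lambda>v. ereal s * g v) = ereal s * Liminf (at x) g"
    using assms(3) by (intro Liminf_ereal_mult_left) simp_all
  have "ereal s * g x \<le> ereal s * Liminf (at x) g"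
    using assms(1,3) unfolding lsc_fun_def by (intro ereal_mult_left_mono) auto
  hence "ereal ((1/2) * \<bar>x - q\<bar>^2) + ereal s * g x
      \<le> Liminf (at x) (\<lambda>v. ereal ((1/2) * \<bar>v - q\<bar>^2)) + Liminf (at x) (\<lambda>v. ereal s * g v)"
    using L1 L2 by (simp add: add_left_mono)
  also have "\<dots> \<le> Liminf (at x) (\<lambda>v. ereal ((1/2) * \<bar>v - q\<bar>^2) + ereal s * g v)"
    using assms by (intro Liminf_add_le) (auto intro!: always_eventually)
  finally show ?thesis .
qed

lemma lsc_closed_sub:
  fixes f :: "real \<Rightarrow> ereal"
  assumes "\<And>x. f x \<le> Liminf (at x) f"
  shows "closed {v. f v \<le> C}"
  unfolding closed_limpt
proof safe
  fix x assume "x islimpt {v. f v \<le> C}"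
  hence ne: "\<not> eventually (\<lambda>y. \<not> f y \<le> C) (at x)" by (simp add: islimpt_iff_eventually)
  show "f x \<le> C"
  proof (rule ccontr)
    assume "\<not> f x \<le> C"
    hence "C < Liminf (at x) f" using assms[of x] by auto
    hence "eventually (\<lambda>y. C < f y) (at x)" using le_Liminf_iff[of "Liminf (at x) f" "at x" f] by auto
    hence "eventually (\<lambda>y. \<not> f y \<le> C) (at x)" by (rule eventually_mono) auto
    with ne show False by blast
  qed
qed

lemma prox_exists:
  assumes "lsc_fun g" "\<And>x. g x \<ge> 0" "s > 0" "g w < \<infinity>"
  shows "\<exists>u. u \<in> prox g s q"
proof -
  define f where "f v = ereal ((1/2) * \<bar>v - q\<bar>^2) + ereal s * g v" for v
  have f0: "f v \<ge> 0" for v using assms(2)[of v] assms(3) unfolding f_def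
    by (intro add_nonneg_nonneg) auto
  have fge: "ereal ((1/2) * \<bar>v - q\<bar>^2) \<le> f v" for v
  proof -
    have "0 \<le> ereal s * g v" using assms(2)[of v] assms(3) by simp
    thus "ereal ((1/2) * \<bar>v - q\<bar>^2) \<le> f v" unfolding f_def using add_left_mono[of 0 "ereal s * g v" "ereal ((1/2) * \<bar>v - q\<bar>^2)"] by simp
  qed
  define m where "m = (INF v. f v)"
  have mw: "m \<le> f w" unfolding m_def by (rule INF_lower) simp
  have fw: "f w < \<infinity>" using assms(3,4) assms(2)[of w] unfolding f_def
    by (cases "g w") auto
  have m0: "m \<ge> 0" unfolding m_def by (rule INF_greatest) (use f0 in auto)
  obtain m' where m': "m = ereal m'" using mw fw m0 by (cases m) auto
  have m'0: "m' \<ge> 0" using m0 m' by simp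
  define F where "F n = {v. f v \<le> ereal (m' + 1 / real (Suc n))}" for n
  have lscf: "f x \<le> Liminf (at x) f" for x
    using lsc_f[OF assms(1,2,3), of x q] unfolding f_def by simp
  have closedF: "closed (F n)" for n unfolding F_def by (rule lsc_closed_sub) (rule lscf)
  have boundF: "F n \<subseteq> cball q (2*m' + 3)" for n
  proof
    fix v assume "v \<in> F n"
    hence "ereal ((1/2) * \<bar>v - q\<bar>^2) \<le> ereal (m' + 1 / real (Suc n))"
      unfolding F_def using fge[of v] order_trans by blast
    hence "(1/2) * \<bar>v - q\<bar>^2 \<le> m' + 1 / real (Suc n)" by simp
    moreover have "1 / real (Suc n) \<le> 1" by simp
    ultimately have h: "\<bar>v - q\<bar>^2 \<le> 2*m' + 2" by linarith
    have "\<bar>v - q\<bar> \<le> 2*m' + 3"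
    proof (cases "\<bar>v - q\<bar> \<le> 1")
      case True thus ?thesis using m'0 by linarith
    next
      case False
      hence "\<bar>v - q\<bar> * 1 \<le> \<bar>v - q\<bar> * \<bar>v - q\<bar>" by (intro mult_left_mono) auto
      hence "\<bar>v - q\<bar> \<le> \<bar>v - q\<bar>^2" by (simp add: power2_eq_square)
      thus ?thesis using h by linarith
    qed
    thus "v \<in> cball q (2*m' + 3)" by (simp add: dist_real_def abs_minus_commute)
  qed
  have compF: "compact (F n)" for n
    using closedF boundF by (meson bounded_cball bounded_subset compact_eq_bounded_closed)
  have neF: "F n \<noteq> {}" for n
  proof -
    have "m < ereal (m' + 1 / real (Suc n))" using m' by simp
    then obtain v where "f v < ereal (m' + 1 / real (Suc n))" unfolding m_def
      by (auto simp: INF_less_iff)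
    hence "v \<in> F n" unfolding F_def by simp
    thus ?thesis by blast
  qed
  have monoF: "m1 \<le> n \<Longrightarrow> F n \<subseteq> F m1" for m1 n
  proof -
    assume "m1 \<le> n"
    hence "1 / real (Suc n) \<le> 1 / real (Suc m1)" by (simp add: frac_le)
    hence "ereal (m' + 1 / real (Suc n)) \<le> ereal (m' + 1 / real (Suc m1))" by simp
    thus "F n \<subseteq> F m1" unfolding F_def using order_trans by blast
  qed
  have "\<Inter>(range F) \<noteq> {}" by (rule compact_nest[OF compF neF monoF])
  then obtain x where x: "x \<in> \<Inter>(range F)" by (meson ex_in_conv)
  have fx: "f x \<le> m"
  proof -
    have all: "f x \<le> ereal (m' + 1 / real (Suc n))" for n using x unfolding F_def by auto
    from all[of 0] f0[of x] obtain y where y: "f x = ereal y" by (cases "f x") auto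
    have "y \<le> m'"
    proof (rule ccontr)
      assume "\<not> y \<le> m'"
      hence "0 < y - m'" by simp
      then obtain n where n: "inverse (real (Suc n)) < y - m'" using reals_Archimedean by blast
      have "y \<le> m' + 1 / real (Suc n)" using all[of n] y by simp
      with n show False by (simp add: divide_inverse)
    qed
    thus ?thesis using y m' by simp
  qed
  have "\<forall>v. f x \<le> f v"
  proof
    fix v have "m \<le> f v" unfolding m_def by (rule INF_lower) simp
    thus "f x \<le> f v" using fx by (rule order_trans[rotated])
  qed
  thus ?thesis unfolding prox_def f_def by blast
qed



lemma concave_a:
  fixes G G1 G2 :: "real \<Rightarrow> real"
  assumes e: "\<epsilon> > 0" and s: "s > 0"
    and D: "\<And>x. 0 < x \<Longrightarrow> x < \<epsilon> \<Longrightarrow> (G has_real_derivative G1 x) (at x)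
              \<and> (G1 has_real_derivative G2 x) (at x) \<and> s * G2 x < -1 \<and> G x \<ge> 0"
    and u: "0 < u" "u < \<epsilon>"
    and m: "\<And>v. 0 < v \<Longrightarrow> v < \<epsilon> \<Longrightarrow> (1/2)*(u-q)^2 + s * G u \<le> (1/2)*(v-q)^2 + s * G v"
  shows False
proof -
  define \<phi> where "\<phi> v = (1/2)*(v-q)^2 + s * G v" for v
  define \<phi>1 where "\<phi>1 v = (v - q) + s * G1 v" for v
  have d\<phi>: "(\<phi> has_real_derivative \<phi>1 x) (at x)" if "0 < x" "x < \<epsilon>" for x
    unfolding \<phi>_def \<phi>1_def using D[OF that]
    by (auto intro!: derivative_eq_intros)
  have d\<phi>1: "(\<phi>1 has_real_derivative (1 + s * G2 x)) (at x)" if "0 < x" "x < \<epsilon>" for x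
    unfolding \<phi>1_def using D[OF that]
    by (auto intro!: derivative_eq_intros)
  have neg: "1 + s * G2 x < 0" if "0 < x" "x < \<epsilon>" for x using D[OF that] by linarith
  have "\<phi>1 u = 0"
  proof (rule DERIV_local_min[OF d\<phi>[OF u]])
    show "0 < min u (\<epsilon> - u)" using u by simp
    show "\<forall>y. \<bar>u - y\<bar> < min u (\<epsilon> - u) \<longrightarrow> \<phi> u \<le> \<phi> y"
      unfolding \<phi>_def using m by (auto simp: abs_if split: if_splits)
  qed
  obtain d where d: "d > 0" "\<And>h. h > 0 \<Longrightarrow> h < d \<Longrightarrow> \<phi>1 u > \<phi>1 (u + h)"
    using DERIV_neg_dec_right[OF d\<phi>1[OF u] neg[OF u]] by blast
  define t where "t = min (d/2) ((\<epsilon> - u)/2)"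
  have ta: "t \<le> d/2" "t \<le> (\<epsilon> - u)/2" "t > 0" using d u unfolding t_def by (simp_all add: min_def)
  have t1: "t > 0" using ta by simp
  have t2: "t < d" using ta d by linarith
  have t3: "u + t < \<epsilon>" using ta u by (simp add: field_simps)
  note t = t1 t2 t3
  have "\<phi> (u + t) < \<phi> u"
  proof (rule DERIV_neg_imp_decreasing_open[of u "u+t" \<phi>])
    show "u < u + t" using t by simp
    fix x assume x: "u < x" "x < u + t"
    have "\<phi>1 x < 0" using d(2)[of "x - u"] x t \<open>\<phi>1 u = 0\<close> by auto
    thus "\<exists>y. (\<phi> has_real_derivative y) (at x) \<and> y < 0" using d\<phi>[of x] x u t by auto
  next
    show "continuous_on {u..u+t} \<phi>"
    proof (rule continuous_at_imp_continuous_on, intro ballI)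
      fix z assume "z \<in> {u..u+t}"
      hence "0 < z" "z < \<epsilon>" using u t by auto
      thus "isCont \<phi> z" using d\<phi> DERIV_isCont by blast
    qed
  qed
  moreover have "\<phi> u \<le> \<phi> (u + t)" unfolding \<phi>_def using m[of "u+t"] t u by simp
  ultimately show False by simp
qed

lemma concave_b:
  fixes G G1 G2 :: "real \<Rightarrow> real" and v s \<epsilon> :: real
  assumes e: "\<epsilon> > 0" and s: "s > 0"
    and D: "\<And>x. 0 < x \<Longrightarrow> x < \<epsilon> \<Longrightarrow> (G has_real_derivative G1 x) (at x)
              \<and> (G1 has_real_derivative G2 x) (at x) \<and> s * G2 x < -1 \<and> G x \<ge> 0"
    and v: "0 < v" "v < \<epsilon>/2"
  shows "(\<epsilon>/4) * v \<le> (1/2) * v^2 + s * G v"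
proof (rule ccontr)
  define q where "q = \<epsilon>/4"
  define b where "b = \<epsilon>/2"
  define k where "k x = (1/2) * x^2 + s * G x - q * x" for x
  define k1 where "k1 x = x + s * G1 x - q" for x
  have dk: "(k has_real_derivative k1 x) (at x)" if "0 < x" "x < \<epsilon>" for x
    unfolding k_def k1_def using D[OF that]
    by (auto intro!: derivative_eq_intros)
  have dk1: "(k1 has_real_derivative (1 + s * G2 x)) (at x)" if "0 < x" "x < \<epsilon>" for x
    unfolding k1_def using D[OF that]
    by (auto intro!: derivative_eq_intros)
  have neg: "1 + s * G2 x < 0" if "0 < x" "x < \<epsilon>" for x using D[OF that] by linarith
  have kge: "k x \<ge> - q * x" if "0 < x" "x < \<epsilon>" for x
    unfolding k_def using D[OF that] s by (simp add: zero_le_mult_iff)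
  have k1dec: "k1 y < k1 x" if "0 < x" "x < y" "y < \<epsilon>" for x y
  proof (rule DERIV_neg_imp_decreasing[of x y k1])
    show "x < y" using that by simp
    fix z assume "x \<le> z" "z \<le> y"
    hence "0 < z" "z < \<epsilon>" using that by auto
    thus "\<exists>l. (k1 has_real_derivative l) (at z) \<and> l < 0" using dk1 neg by blast
  qed
  have cont: "continuous_on {x..y} k" if "0 < x" "y < \<epsilon>" for x y
  proof (rule continuous_at_imp_continuous_on, intro ballI)
    fix z assume "z \<in> {x..y}"
    hence "0 < z" "z < \<epsilon>" using that by auto
    thus "isCont k z" using dk DERIV_isCont by blast
  qed
  assume "\<not> (\<epsilon>/4) * v \<le> (1/2) * v^2 + s * G v"
  hence kv: "k v < 0" unfolding k_def q_def by simp
  have vb: "v < b" "b < \<epsilon>" using v e unfolding b_def by auto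
  have kb: "k b \<ge> 0" unfolding k_def q_def b_def using D[of "\<epsilon>/2"] e s
    by (simp add: power2_eq_square zero_le_mult_iff)
  show False
  proof (cases "k1 v \<ge> 0")
    case True
    define x where "x = min (v/2) (- k v / (2*q))"
    have q0: "q > 0" using e unfolding q_def by simp
    have x: "0 < x" "x < v" using v kv q0 unfolding x_def by (auto simp: field_simps)
    have "k x < k v"
    proof (rule DERIV_pos_imp_increasing_open[OF x(2)])
      fix y assume y: "x < y" "y < v"
      have "k1 y > 0" using k1dec[of y v] y x v True vb by linarith
      thus "\<exists>l. (k has_real_derivative l) (at y) \<and> l > 0" using dk[of y] y x vb by auto
    next
      show "continuous_on {x..v} k" using cont x vb by simp
    qed
    moreover have "k x \<ge> - q * x" using kge[of x] x v vb by simp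
    moreover have "q * x \<le> - k v / 2"
    proof -
      have "x \<le> - k v / (2*q)" unfolding x_def by simp
      hence "q * x \<le> q * (- k v / (2*q))" using q0 by (intro mult_left_mono) auto
      also have "q * (- k v / (2*q)) = - k v / 2" using q0 by (simp add: field_simps)
      finally show ?thesis .
    qed
    ultimately show False using kv by linarith
  next
    case False
    have "k b < k v"
    proof (rule DERIV_neg_imp_decreasing_open[OF vb(1)])
      fix y assume y: "v < y" "y < b"
      have "k1 y < 0" using k1dec[of v y] y v False vb by linarith
      thus "\<exists>l. (k has_real_derivative l) (at y) \<and> l < 0" using dk[of y] y v vb by auto
    next
      show "continuous_on {v..b} k" using cont v vb by simp
    qed
    with kb kv show False by linarith
  qed
qed



lemma caseC:
  assumes g0: "\<And>x. g x \<ge> 0" "g 0 = 0" and s: "s > 0" and w: "w > 0" "g w = ereal Gw"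
    and C: "B3c g"
  shows "\<exists>\<delta>>0. \<exists>q>0. (\<forall>u qq. 0 < u \<longrightarrow> u \<in> prox g s qq \<longrightarrow> \<delta> \<le> u) \<and>
     (\<forall>v>0. g v \<noteq> \<infinity> \<longrightarrow> q * v \<le> (1/2) * v^2 + s * real_of_ereal (g v))"
proof -
  have "0 < Liminf (at_right 0) g" using C unfolding B3c_def by simp
  then obtain c where c: "0 < ereal c" "ereal c < Liminf (at_right 0) g" using ereal_dense2 by blast
  have "eventually (\<lambda>x. ereal c < g x) (at_right (0::real))" using less_LiminfD[OF c(2)] .
  then obtain \<epsilon> where e: "\<epsilon> > 0" "\<And>y. 0 < y \<Longrightarrow> y < \<epsilon> \<Longrightarrow> ereal c < g y"
    unfolding eventually_at_right_field by auto
  have c0: "c > 0" using c by simp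
  have Gw0: "Gw \<ge> 0" using g0(1)[of w] w by simp
  define A where "A = (1/2) * w^2 + s * Gw"
  define K where "K = 2 * A / w"
  have A0: "A > 0" unfolding A_def using w Gw0 s by (simp add: add_pos_nonneg)
  have K0: "K > 0" unfolding K_def using A0 w by simp
  define \<delta> where "\<delta> = min \<epsilon> (min (w/2) (s*c/K))"
  have \<delta>0: "\<delta> > 0" unfolding \<delta>_def using e w s c0 K0 by simp
  define q where "q = min (s*c/\<epsilon>) (\<epsilon>/2)"
  have q0: "q > 0" unfolding q_def using e s c0 by simp
  have part1: "\<delta> \<le> u" if u: "0 < u" "u \<in> prox g s qq" for u qq
  proof (rule ccontr)
    assume "\<not> \<delta> \<le> u"
    hence ud: "u < \<epsilon>" "u < w/2" "u < s*c/K" unfolding \<delta>_def by auto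
    from prox_cmp0[OF u(2) g0(2) s g0(1)] obtain Gu where Gu: "g u = ereal Gu"
      and h0: "qq * u \<ge> (1/2)*u^2 + s * Gu"
      using g0(1)[of u] by (cases "g u") auto
    have cGu: "c < Gu" using e(2)[OF u(1) ud(1)] Gu by simp
    have "s * c < s * Gu" using cGu s by simp
    moreover have "0 \<le> u^2" by simp
    ultimately have h1: "s * c \<le> qq * u" using h0 by linarith
    have qq0: "qq > 0" using h1 s c0 u(1) by (smt (verit) mult_pos_pos mult_nonpos_nonneg)
    have "ereal ((1/2) * \<bar>u - qq\<bar>^2) + ereal s * g u \<le> ereal ((1/2) * \<bar>w - qq\<bar>^2) + ereal s * g w"
      using u(2) unfolding prox_def by blast
    hence "(1/2) * (u - qq)^2 + s * Gu \<le> (1/2) * (w - qq)^2 + s * Gw" using Gu w by simp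
    hence "qq * (w - u) \<le> A - (1/2)*u^2 - s * Gu" unfolding A_def by (simp add: power2_eq_square algebra_simps)
    moreover have "s * Gu \<ge> 0" using cGu c0 s by simp
    moreover have "0 \<le> u^2" by simp
    ultimately have h2: "qq * (w - u) \<le> A" by linarith
    have "qq * (w/2) \<le> qq * (w - u)" using qq0 ud by (intro mult_left_mono) auto
    hence "qq * w \<le> 2 * A" using h2 by simp
    hence "qq \<le> K" unfolding K_def using w by (simp add: field_simps)
    hence "qq * u \<le> K * u" using u by (intro mult_right_mono) auto
    hence "s * c \<le> K * u" using h1 by simp
    hence "s * c / K \<le> u" using K0 by (simp add: field_simps)
    with ud show False by simp
  qed
  have part2: "q * v \<le> (1/2) * v^2 + s * real_of_ereal (g v)" if v: "v > 0" "g v \<noteq> \<infinity>" for v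
  proof -
    obtain b where b: "g v = ereal b" using v(2) g0(1)[of v] by (cases "g v") auto
    have b0: "b \<ge> 0" using g0(1)[of v] b by simp
    show ?thesis
    proof (cases "v < \<epsilon>")
      case True
      have cb: "c < b" using e(2)[OF v(1) True] b by simp
      have "q \<le> s*c/\<epsilon>" unfolding q_def by (rule min.cobounded1)
      hence "q * v \<le> (s*c/\<epsilon>) * v" using v by (intro mult_right_mono) auto
      also have "\<dots> \<le> (s*c/\<epsilon>) * \<epsilon>" using True s c0 e by (intro mult_left_mono) auto
      also have "\<dots> = s * c" using e by simp
      also have "\<dots> \<le> s * b" using cb s by simp
      finally show ?thesis using b by (simp add: add_increasing)
    next
      case False
      have "q \<le> \<epsilon>/2" unfolding q_def by (rule min.cobounded2)
      hence "q * v \<le> (\<epsilon>/2) * v" using v by (intro mult_right_mono) auto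
      also have "\<dots> \<le> (v/2) * v" using False v by (intro mult_right_mono) auto
      also have "\<dots> = (1/2) * v^2" by (simp add: power2_eq_square)
      finally show ?thesis using b b0 s by (simp add: add_increasing2)
    qed
  qed
  show ?thesis using \<delta>0 q0 part1 part2 by blast
qed

lemma caseAB:
  assumes g0: "\<And>x. g x \<ge> 0" "g 0 = 0" and s: "s > 0"
    and T: "twice_diff_right0 g" and ev: "eventually (\<lambda>u. g2 g u < -1/s) (at_right 0)"
  shows "\<exists>\<delta>>0. \<exists>q>0. (\<forall>u qq. 0 < u \<longrightarrow> u \<in> prox g s qq \<longrightarrow> \<delta> \<le> u) \<and>
     (\<forall>v>0. g v \<noteq> \<infinity> \<longrightarrow> q * v \<le> (1/2) * v^2 + s * real_of_ereal (g v))"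
proof -
  obtain e1 where e1: "e1 > 0" "\<forall>x\<in>{0<..<e1}. g x \<noteq> \<infinity> \<and> g x \<noteq> -\<infinity> \<and>
      (greal g has_real_derivative deriv (greal g) x) (at x) \<and>
      (deriv (greal g) has_real_derivative g2 g x) (at x)"
    using T unfolding twice_diff_right0_def by blast
  obtain e2 where e2: "e2 > 0" "\<And>y. 0 < y \<Longrightarrow> y < e2 \<Longrightarrow> g2 g y < -1/s"
    using ev unfolding eventually_at_right_field by auto
  define \<epsilon> where "\<epsilon> = min e1 e2"
  have e: "\<epsilon> > 0" unfolding \<epsilon>_def using e1 e2 by simp
  have fin: "g x = ereal (greal g x)" if "0 < x" "x < \<epsilon>" for x
    using e1(2) that unfolding \<epsilon>_def greal_def by (cases "g x") auto
  have D: "(greal g has_real_derivative deriv (greal g) x) (at x)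
              \<and> (deriv (greal g) has_real_derivative g2 g x) (at x) \<and> s * g2 g x < -1 \<and> greal g x \<ge> 0"
    if "0 < x" "x < \<epsilon>" for x
  proof -
    have "g2 g x < -1/s" using e2(2)[of x] that unfolding \<epsilon>_def by simp
    hence "s * g2 g x < s * (-(1/s))" using s by (intro mult_strict_left_mono) auto
    moreover have "s * (-(1/s)) = -1" using s by simp
    ultimately have "s * g2 g x < -1" by simp
    moreover have "greal g x \<ge> 0" unfolding greal_def using g0(1)[of x] by (simp add: real_of_ereal_pos)
    ultimately show ?thesis using e1(2) that unfolding \<epsilon>_def by auto
  qed
  have part1: "\<epsilon> \<le> u" if u: "0 < u" "u \<in> prox g s qq" for u qq
  proof (rule ccontr)
    assume "\<not> \<epsilon> \<le> u"
    hence ue: "u < \<epsilon>" by simp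
    show False
    proof (rule concave_a[OF e s D u(1) ue])
      fix v assume v: "0 < v" "v < \<epsilon>"
      have "ereal ((1/2) * \<bar>u - qq\<bar>^2) + ereal s * g u \<le> ereal ((1/2) * \<bar>v - qq\<bar>^2) + ereal s * g v"
        using u(2) unfolding prox_def by blast
      thus "(1/2)*(u-qq)^2 + s * greal g u \<le> (1/2)*(v-qq)^2 + s * greal g v"
        using fin[OF u(1) ue] fin[OF v] by simp
    qed auto
  qed
  have part2: "(\<epsilon>/4) * v \<le> (1/2) * v^2 + s * real_of_ereal (g v)" if v: "v > 0" "g v \<noteq> \<infinity>" for v
  proof (cases "v < \<epsilon>/2")
    case True
    show ?thesis using concave_b[OF e s D v(1) True] unfolding greal_def by simp
  next
    case False
    have b0: "real_of_ereal (g v) \<ge> 0" using g0(1)[of v] by (simp add: real_of_ereal_pos)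
    have "(\<epsilon>/4) * v \<le> (v/2) * v" using False v by (intro mult_right_mono) auto
    also have "\<dots> = (1/2) * v^2" by (simp add: power2_eq_square)
    finally show ?thesis using b0 s by (simp add: add_increasing2)
  qed
  have "\<epsilon>/4 > 0" using e by simp
  thus ?thesis using e part1 part2 by blast
qed



theorem corollary4p7:
  fixes g :: "real \<Rightarrow> ereal" and L u z :: real
  assumes "assumptionB g"
    and "L > 0" and "1 / L > s0 g"
    and "u \<in> GL g L z"
  shows "(u > 0 \<longrightarrow> u \<ge> max (sigma g (1/L)) ((L * q0 g (1/L) - z) / L))
       \<and> (u < 0 \<longrightarrow> u \<le> min (- sigma g (1/L)) (- (L * q0 g (1/L) + z) / L))
       \<and> (u = 0 \<longrightarrow> \<bar>z\<bar> \<le> L * q0 g (1/L))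
       \<and> sigma g (1/L) > 0 \<and> q0 g (1/L) > 0"
proof -
  define s where "s = 1/L"
  have s: "s > 0" unfolding s_def using assms(2) by simp
  have lsc: "lsc_fun g" and sym: "\<And>x. g (-x) = g x" and g00: "g 0 = 0"
    and B2: "\<exists>u. u \<noteq> 0 \<and> g u < \<infinity>" and B3: "B3a g \<or> B3b g \<or> B3c g"
    and gpos: "\<And>x. g x \<ge> 0"
    using assms(1) unfolding assumptionB_def by auto
  obtain w0 where w0: "w0 \<noteq> 0" "g w0 < \<infinity>" using B2 by blast
  define w where "w = \<bar>w0\<bar>"
  have wpos: "w > 0" unfolding w_def using w0 by simp
  have gw: "g w < \<infinity>" unfolding w_def using w0 sym[of w0] by (cases "w0 \<ge> 0") auto
  obtain Gw where Gw: "g w = ereal Gw" using gw gpos[of w] by (cases "g w") auto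
  define Q where "Q = {q. q \<ge> 0 \<and> (\<forall>u. ereal (q * \<bar>u\<bar>) \<le> ereal ((1/2) * u^2) + ereal s * g u)}"
  define S where "S = {\<bar>u\<bar> | u. u \<noteq> 0 \<and> (\<exists>q. u \<in> prox g s q)}"
  have q0eq: "q0 g (1/L) = Sup Q" unfolding q0_def Q_def s_def by simp
  have sigeq: "sigma g (1/L) = Inf S" unfolding sigma_def S_def s_def by simp
  define B where "B = ((1/2) * w^2 + s * Gw) / w"
  have Q0: "0 \<in> Q" unfolding Q_def
  proof safe
    fix u
    have a: "0 \<le> ereal s * g u" using gpos[of u] s by simp
    have b: "0 \<le> ereal ((1/2) * u^2)" by simp
    from b a have "0 \<le> ereal ((1/2) * u^2) + ereal s * g u" by (rule add_nonneg_nonneg)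
    thus "ereal (0 * \<bar>u\<bar>) \<le> ereal ((1/2) * u^2) + ereal s * g u" by (simp add: zero_ereal_def)
  qed
  have QB: "q \<le> B" if "q \<in> Q" for q
  proof -
    have "ereal (q * \<bar>w\<bar>) \<le> ereal ((1/2) * w^2) + ereal s * g w" using that unfolding Q_def by blast
    hence "q * w \<le> (1/2) * w^2 + s * Gw" using Gw wpos by simp
    thus ?thesis unfolding B_def using wpos by (simp add: field_simps)
  qed
  have bddQ: "bdd_above Q" by (rule bdd_aboveI[of _ B]) (rule QB)
  have Pos: "Sup Q \<le> q" if "0 < v" "v \<in> prox g s q" for v q
  proof (rule cSup_least)
    show "Q \<noteq> {}" using Q0 by blast
    fix q' assume q': "q' \<in> Q"
    from prox_cmp0[OF that(2) g00 s gpos] obtain Gv where Gv: "g v = ereal Gv"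
      and h: "q * v \<ge> (1/2) * v^2 + s * Gv" using gpos[of v] by (cases "g v") auto
    have "ereal (q' * \<bar>v\<bar>) \<le> ereal ((1/2) * v^2) + ereal s * g v" using q' unfolding Q_def by blast
    hence "q' * v \<le> (1/2) * v^2 + s * Gv" using Gv that(1) by simp
    hence "q' * v \<le> q * v" using h by linarith
    thus "q' \<le> q" using that(1) by simp
  qed
  have Zero: "\<bar>q\<bar> \<in> Q" if "0 \<in> prox g s q" for q
    unfolding Q_def
  proof (safe)
    show "0 \<le> \<bar>q\<bar>" by simp
    fix v
    have H: "\<And>y. ereal ((1/2) * \<bar>0 - q\<bar>^2) + ereal s * g 0 \<le> ereal ((1/2) * \<bar>y - q\<bar>^2) + ereal s * g y"
      using that unfolding prox_def by blast
    show "ereal (\<bar>q\<bar> * \<bar>v\<bar>) \<le> ereal ((1/2) * v^2) + ereal s * g v"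
    proof (cases "g v")
      case PInf thus ?thesis using s by simp
    next
      case MInf thus ?thesis using gpos[of v] by simp
    next
      case (real b)
      have "(1/2) * q^2 \<le> (1/2) * (v - q)^2 + s * b" using H[of v] real g00 by simp
      hence a1: "q * v \<le> (1/2) * v^2 + s * b" by (simp add: power2_eq_square algebra_simps)
      have "(1/2) * q^2 \<le> (1/2) * (-v - q)^2 + s * b" using H[of "-v"] real g00 sym[of v] by simp
      hence a2: "- (q * v) \<le> (1/2) * v^2 + s * b" by (simp add: power2_eq_square algebra_simps)
      have "\<bar>q\<bar> * \<bar>v\<bar> = \<bar>q * v\<bar>" by (simp add: abs_mult)
      hence "\<bar>q\<bar> * \<bar>v\<bar> \<le> (1/2) * v^2 + s * b" using a1 a2 by linarith
      thus ?thesis using real by simp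
    qed
  qed
  have bddS: "bdd_below S" by (rule bdd_belowI[of _ 0]) (auto simp: S_def)
  have SigLow: "Inf S \<le> \<bar>v\<bar>" if "v \<noteq> 0" "v \<in> prox g s q" for v q
    by (rule cInf_lower[OF _ bddS]) (use that in \<open>auto simp: S_def\<close>)
  have Cases: "\<exists>\<delta>>0. \<exists>q>0. (\<forall>u qq. 0 < u \<longrightarrow> u \<in> prox g s qq \<longrightarrow> \<delta> \<le> u) \<and>
     (\<forall>v>0. g v \<noteq> \<infinity> \<longrightarrow> q * v \<le> (1/2) * v^2 + s * real_of_ereal (g v))"
  proof (cases "B3c g")
    case True thus ?thesis using caseC[of g, OF gpos g00 s wpos Gw] by blast
  next
    case nC: False
    show ?thesis
    proof (cases "B3b g")
      case True
      hence "twice_diff_right0 g" "((\<lambda>u. ereal (g2 g u)) \<longlongrightarrow> -\<infinity>) (at_right 0)"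
        unfolding B3b_def by auto
      moreover from this(2) have "eventually (\<lambda>u. ereal (g2 g u) < ereal (-1/s)) (at_right 0)"
        unfolding tendsto_MInfty by blast
      ultimately show ?thesis using caseAB[of g, OF gpos g00 s] by simp
    next
      case nB: False
      hence A: "B3a g" using B3 nC by blast
      define l where "l = Limsup (at_right 0) (\<lambda>u. ereal (g2 g u))"
      have l: "l > -\<infinity>" "l < 0" "twice_diff_right0 g" using A unfolding B3a_def l_def by auto
      obtain r where r: "l = ereal r" using l by (cases l) auto
      have r0: "r < 0" using l r by simp
      have "s0 g = - 1 / r" unfolding s0_def using nB nC r l_def by simp
      hence "s > - 1 / r" using assms(3) unfolding s_def by simp
      hence "1 / L > 1 / (-r)" unfolding s_def by simp
      hence "-r > L" using r0 assms(2) by (simp add: field_simps)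
      hence "r < - 1/s" unfolding s_def by simp
      hence "l < ereal (-1/s)" using r by simp
      hence "eventually (\<lambda>u. ereal (g2 g u) < ereal (-1/s)) (at_right 0)"
        unfolding l_def by (rule Limsup_lessD)
      thus ?thesis using caseAB[of g, OF gpos g00 s l(3)] by simp
    qed
  qed
  then obtain \<delta> qp where \<delta>: "\<delta> > 0" "\<And>u qq. 0 < u \<Longrightarrow> u \<in> prox g s qq \<Longrightarrow> \<delta> \<le> u"
    and qp: "qp > 0" "\<And>v. v > 0 \<Longrightarrow> g v \<noteq> \<infinity> \<Longrightarrow> qp * v \<le> (1/2) * v^2 + s * real_of_ereal (g v)"
    by blast
  have qpQ: "qp \<in> Q" unfolding Q_def
  proof safe
    show "0 \<le> qp" using qp by simp
    have pos: "ereal (qp * \<bar>v\<bar>) \<le> ereal ((1/2) * v^2) + ereal s * g v" if "v > 0" for v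
    proof (cases "g v")
      case PInf thus ?thesis using s by simp
    next
      case MInf thus ?thesis using gpos[of v] by simp
    next
      case (real b)
      thus ?thesis using qp(2)[of v] that by simp
    qed
    fix v
    show "ereal (qp * \<bar>v\<bar>) \<le> ereal ((1/2) * v^2) + ereal s * g v"
    proof (cases "v = 0")
      case True thus ?thesis using g00 by simp
    next
      case False
      show ?thesis
      proof (cases "v > 0")
        case True thus ?thesis using pos by simp
      next
        case False
        hence "-v > 0" using \<open>v \<noteq> 0\<close> by simp
        from pos[OF this] show ?thesis using sym[of v] by simp
      qed
    qed
  qed
  have q0pos: "Sup Q > 0" using cSup_upper[OF qpQ bddQ] qp by simp
  define qs where "qs = B + 1"
  obtain v where v: "v \<in> prox g s qs" using prox_exists[OF lsc gpos s gw] by blast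
  have v0: "v \<noteq> 0"
  proof
    assume "v = 0"
    hence "ereal ((1/2) * \<bar>0 - qs\<bar>^2) + ereal s * g 0 \<le> ereal ((1/2) * \<bar>w - qs\<bar>^2) + ereal s * g w"
      using v unfolding prox_def by blast
    hence "(1/2) * qs^2 \<le> (1/2) * (w - qs)^2 + s * Gw" using g00 Gw by simp
    hence "qs * w \<le> (1/2) * w^2 + s * Gw" by (simp add: power2_eq_square algebra_simps)
    hence "qs \<le> B" unfolding B_def using wpos by (simp add: field_simps)
    thus False unfolding qs_def by simp
  qed
  have Sne: "S \<noteq> {}" unfolding S_def using v v0 by blast
  have Sdel: "\<delta> \<le> x" if xS: "x \<in> S" for x
  proof -
    obtain y q where y: "x = \<bar>y\<bar>" "y \<noteq> 0" "y \<in> prox g s q" using xS unfolding S_def by blast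
    show ?thesis
    proof (cases "y > 0")
      case True thus ?thesis using \<delta>(2)[OF True y(3)] y by simp
    next
      case False
      hence "-y > 0" using y by simp
      from \<delta>(2)[OF this prox_neg[OF y(3) sym]] show ?thesis using y False by simp
    qed
  qed
  have sigpos: "Inf S > 0" using cInf_greatest[OF Sne Sdel] \<delta> by simp
  have uprox: "u \<in> prox g s (u + z/L)" unfolding s_def by (rule GL_prox[OF assms(4) assms(2) gpos])
  have c1: "u \<ge> max (Inf S) ((L * Sup Q - z) / L)" if "u > 0"
  proof -
    have "Inf S \<le> u" using SigLow[OF _ uprox] that by simp
    moreover have "Sup Q \<le> u + z/L" using Pos[OF that uprox] .
    hence "(L * Sup Q - z) / L \<le> u" using assms(2) by (simp add: field_simps)
    ultimately show ?thesis by simp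
  qed
  have c2: "u \<le> min (- Inf S) (- (L * Sup Q + z) / L)" if "u < 0"
  proof -
    have i1: "Inf S \<le> -u" using SigLow[OF _ uprox] that by simp
    have p: "-u \<in> prox g s (-(u + z/L))" by (rule prox_neg[OF uprox sym])
    have "-u > 0" using that by simp
    hence "Sup Q \<le> -(u + z/L)" using Pos p by blast
    hence "u \<le> - (L * Sup Q + z) / L" using assms(2) by (simp add: field_simps)
    thus ?thesis using i1 by simp
  qed
  have c3: "\<bar>z\<bar> \<le> L * Sup Q" if "u = 0"
  proof -
    have "0 \<in> prox g s (z/L)" using uprox that by simp
    hence "\<bar>z/L\<bar> \<le> Sup Q" using Zero cSup_upper bddQ by blast
    hence "\<bar>z\<bar> / L \<le> Sup Q" using assms(2) by simp
    thus ?thesis using assms(2) by (simp add: field_simps)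
  qed
  show ?thesis unfolding q0eq sigeq using c1 c2 c3 sigpos q0pos by blast
qed


end
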